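(* Let $\alpha,\beta,\gamma,x$ be non-negative integers with $(\alpha,\beta,\gamma,x)\neq(0,0,0,0)$. Then for every integer $n\ge0$, $$T_{n+1}^{1,x}(\alpha,\beta,\gamma)=\gamma\,T_n^{1,x}(\alpha,\beta,\gamma-\alpha)+x\beta\sum_{k=0}^{n}\binom{n}{k}T_{n-k}^{1,x}(\alpha,\beta,\gamma)\,T_k^{1,x}(\alpha,\beta,\beta-\alpha).$$
   Context: For complex numbers $c,\alpha$ and an integer $n\ge 0$ let $(c|\alpha)_n=\prod_{i=0}^{n-1}(c-i\alpha)$, with $(c|\alpha)_0=1$. Let $E_{\alpha,c}(t)=\sum_{n\ge 0}(c|\alpha)_n\,t^n/n!$, viewed as a formal power series in $t$. It equals $(1+\alpha t)^{c/\alpha}$ if $\alpha\neq0$ and $e^{ct}$ if $\alpha=0$. For complex $\alpha,\beta,\gamma,x$ and a non-negative integer $\lambda$, the numbers $T_n^{\lambda,x}(\alpha,\beta,\gamma)$, $n\ge0$, are defined by the formal power series identity $$\sum_{n\ge0}T_n^{\lambda,x}(\alpha,\beta,\gamma)\frac{t^n}{n!}=E_{\alpha,\gamma}(t)\,\bigl(1-x(E_{\alpha,\beta}(t)-1)\bigr)^{-\lambda}.$$ The third argument may be any complex number, e.g. $\gamma-\alpha$ or $\beta-\alpha$. *)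

theory Defs
  imports Complex_Main "HOL-Computational_Algebra.Formal_Power_Series"
begin

definition gen_fall :: "complex \<Rightarrow> complex \<Rightarrow> nat \<Rightarrow> complex" where
  "gen_fall c \<alpha> n = (\<Prod>i<n. (c - of_nat i * \<alpha>))"

definition E_fps :: "complex \<Rightarrow> complex \<Rightarrow> complex fps" where
  "E_fps \<alpha> c = Abs_fps (\<lambda>n. gen_fall c \<alpha> n / fact n)"

text \<open>The base series has constant term 1, so the fps inverse is the genuine inverse.\<close>
definition T :: "nat \<Rightarrow> complex \<Rightarrow> complex \<Rightarrow> complex \<Rightarrow> complex \<Rightarrow> nat \<Rightarrow> complex" where
  "T lam x \<alpha> \<beta> \<gamma> n =
     fact n * fps_nth (E_fps \<alpha> \<gamma> * inverse ((1 - fps_const x * (E_fps \<alpha> \<beta> - 1)) ^ lam)) n"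

end

theory Submission
  imports Defs
begin

unbundle fps_syntax

lemma gen_fall_Suc: "gen_fall c a (Suc n) = c * gen_fall (c - a) a n"
  unfolding gen_fall_def
  by (subst prod.lessThan_Suc_shift) (simp add: algebra_simps)

lemma E_deriv: "fps_deriv (E_fps a c) = fps_const c * E_fps a (c - a)"
proof (rule fps_ext)
  fix n
  have "fps_deriv (E_fps a c) $ n = of_nat (n+1) * (gen_fall c a (Suc n) / fact (Suc n))"
    by (simp add: E_fps_def)
  also have "\<dots> = c * gen_fall (c - a) a n / fact n"
    by (simp add: gen_fall_Suc field_simps del: of_nat_Suc)
  finally show "fps_deriv (E_fps a c) $ n = (fps_const c * E_fps a (c - a)) $ n"
    by (simp add: E_fps_def)
qed

lemma E0: "E_fps a c $ 0 = 1"
  by (simp add: E_fps_def gen_fall_def)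

lemma key:
  fixes a b g x :: complex
  defines "D \<equiv> 1 - fps_const x * (E_fps a b - 1)"
  defines "F \<equiv> \<lambda>c. E_fps a c * inverse D"
  shows "fps_deriv (F g) = fps_const g * F (g - a) + fps_const (x * b) * (F (b - a) * F g)"
proof -
  have D0: "D $ 0 \<noteq> 0" by (simp add: D_def E0)
  have dD: "fps_deriv D = fps_const (- x) * (fps_const b * E_fps a (b - a))"
    unfolding D_def by (simp add: E_deriv) (metis fps_const_neg mult_minus_left)
  have "fps_deriv (F g) = fps_deriv (E_fps a g) * inverse D + E_fps a g * fps_deriv (inverse D)"
    by (simp add: F_def)
  also have "\<dots> = fps_const g * E_fps a (g - a) * inverse D
      + E_fps a g * (fps_const x * (fps_const b * E_fps a (b - a)) * (inverse D)\<^sup>2)"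
    by (simp add: E_deriv fps_inverse_deriv[OF D0] dD flip: fps_const_neg)
  also have "\<dots> = fps_const g * F (g - a) + fps_const (x * b) * (F (b - a) * F g)"
    by (simp add: F_def power2_eq_square fps_const_mult[symmetric] algebra_simps del: fps_const_mult)
  finally show ?thesis .
qed

theorem theorem3:
  fixes \<alpha> \<beta> \<gamma> x :: nat and n :: nat
  assumes "(\<alpha>, \<beta>, \<gamma>, x) \<noteq> (0, 0, 0, 0)"
  shows "T 1 (of_nat x) (of_nat \<alpha>) (of_nat \<beta>) (of_nat \<gamma>) (Suc n) =
           of_nat \<gamma> * T 1 (of_nat x) (of_nat \<alpha>) (of_nat \<beta>) (of_nat \<gamma> - of_nat \<alpha>) n
         + of_nat x * of_nat \<beta> *
           (\<Sum>k=0..n. of_nat (n choose k)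
              * T 1 (of_nat x) (of_nat \<alpha>) (of_nat \<beta>) (of_nat \<gamma>) (n - k)
              * T 1 (of_nat x) (of_nat \<alpha>) (of_nat \<beta>) (of_nat \<beta> - of_nat \<alpha>) k)"
proof -
  define a b g y :: complex where "a = of_nat \<alpha>" "b = of_nat \<beta>" "g = of_nat \<gamma>" "y = of_nat x"
  define D where "D = 1 - fps_const y * (E_fps a b - 1)"
  define F where "F = (\<lambda>c. E_fps a c * inverse D)"
  have TF: "\<And>c m. T 1 y a b c m = fact m * F c $ m"
    by (simp add: T_def F_def D_def)
  have K: "fps_deriv (F g) = fps_const g * F (g - a) + fps_const (y * b) * (F (b - a) * F g)"
    unfolding F_def D_def by (rule key)
  have "T 1 y a b g (Suc n) = fact n * fps_deriv (F g) $ n"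
    unfolding TF by (simp add: algebra_simps)
  also have "\<dots> = g * (fact n * F (g - a) $ n) + y * b * (\<Sum>k=0..n. fact n * (F (b - a) $ k * F g $ (n - k)))"
  proof -
    have P: "(F (b - a) * F g) $ n = (\<Sum>k=0..n. F (b - a) $ k * F g $ (n - k))"
      by (rule fps_mult_nth)
    show ?thesis unfolding K fps_add_nth fps_mult_left_const_nth P
      by (simp add: sum_distrib_left algebra_simps)
  qed
  also have "(\<Sum>k=0..n. fact n * (F (b - a) $ k * F g $ (n - k))) =
     (\<Sum>k=0..n. of_nat (n choose k) * T 1 y a b g (n - k) * T 1 y a b (b - a) k)"
  proof (rule sum.cong[OF refl])
    fix k assume "k \<in> {0..n}"
    hence "k \<le> n" by simp
    hence "(fact n :: complex) = fact k * fact (n - k) * of_nat (n choose k)"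
      by (metis binomial_fact_lemma of_nat_fact of_nat_mult)
    thus "fact n * (F (b - a) $ k * F g $ (n - k)) = of_nat (n choose k) * T 1 y a b g (n - k) * T 1 y a b (b - a) k"
      unfolding TF by simp
  qed
  finally have R: "T 1 y a b g (Suc n) = g * (fact n * F (g - a) $ n) + y * b *
     (\<Sum>k=0..n. of_nat (n choose k) * T 1 y a b g (n - k) * T 1 y a b (b - a) k)" .
  show ?thesis using R unfolding a_b_g_y_def[symmetric] TF by simp
qed

end
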